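(* Let $D,W,N_0,\zeta,P_A,h,g,P^{max}>0$, $\gamma=\frac{g\zeta P_A h}{WN_0}$, $\alpha=\mathbb{L}_0\!\left(\frac{\gamma-1}{e}\right)+1$ with $\mathbb{L}_0$ the principal Lambert W function, and $$\dot\tau_S=\frac{D\ln 2}{W\alpha},\quad \dot\tau_0=\frac{D\ln 2}{W\alpha\gamma}\left(2^{\alpha/\ln 2}-1\right),\quad \ddot\tau_S=\frac{D}{W\log_2\left(1+\frac{P^{max}g}{WN_0}\right)},\quad \ddot\tau_0=\frac{P^{max}\ddot\tau_S}{\zeta P_A h}.$$ Consider the problem: minimize $\tau_0+\tau_S$ over $\tau_0,\tau_S,P\ge0$ subject to $P\tau_S\le\zeta P_A h\tau_0$, $\tau_S W\log_2\left(1+\frac{Pg}{WN_0}\right)\ge D$, and $P\le P^{max}$. If $\zeta P_A h\dot\tau_0/\dot\tau_S\le P^{max}$, then $(\tau_0,\tau_S,P)=(\dot\tau_0,\dot\tau_S,\zeta P_A h\dot\tau_0/\dot\tau_S)$ is optimal. Otherwise $(\tau_0,\tau_S,P)=(\ddot\tau_0,\ddot\tau_S,P^{max})$ is optimal.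
   Context: Single source wireless powered network: the source harvests energy $\zeta P_A h\tau_0$ during time $\tau_0$, then transmits $D$ bits with power $P\le P^{max}$ during time $\tau_S$ over an AWGN channel with gain $g$, bandwidth $W$ and noise spectral density $N_0$. *)

theory Defs
  imports Complex_Main
begin

text \<open>Principal branch of the Lambert W function: for x \<ge> -1/e, the unique
  w \<ge> -1 with w * exp w = x.\<close>
definition lambertW0 :: "real \<Rightarrow> real" where
  "lambertW0 x = (THE w. w \<ge> -1 \<and> w * exp w = x)"

definition feasible ::
  "real \<Rightarrow> real \<Rightarrow> real \<Rightarrow> real \<Rightarrow> real \<Rightarrow> real \<Rightarrow> real \<Rightarrow> real \<Rightarrow> real \<times> real \<times> real \<Rightarrow> bool" where
  "feasible D W N0 \<zeta> PA h g Pmax = (\<lambda>(\<tau>0, \<tau>S, P).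
     \<tau>0 \<ge> 0 \<and> \<tau>S \<ge> 0 \<and> P \<ge> 0 \<and>
     P * \<tau>S \<le> \<zeta> * PA * h * \<tau>0 \<and>
     \<tau>S * W * log 2 (1 + P * g / (W * N0)) \<ge> D \<and>
     P \<le> Pmax)"

definition optimal ::
  "real \<Rightarrow> real \<Rightarrow> real \<Rightarrow> real \<Rightarrow> real \<Rightarrow> real \<Rightarrow> real \<Rightarrow> real \<Rightarrow> real \<times> real \<times> real \<Rightarrow> bool" where
  "optimal D W N0 \<zeta> PA h g Pmax x \<longleftrightarrow>
     feasible D W N0 \<zeta> PA h g Pmax x \<and>
     (\<forall>y. feasible D W N0 \<zeta> PA h g Pmax y \<longrightarrow>
        fst x + fst (snd x) \<le> fst y + fst (snd y))"

end

theory Submission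
  imports Defs
begin

lemma xexp_strict_mono:
  fixes u v :: real
  assumes "-1 \<le> u" "u < v"
  shows "u * exp u < v * exp v"
proof (rule DERIV_pos_imp_increasing_open[OF assms(2)])
  fix x :: real assume "u < x" "x < v"
  hence "0 < (1 + x) * exp x" using assms by simp
  moreover have "DERIV (\<lambda>t. t * exp t) x :> (1 + x) * exp x"
    by (auto intro!: derivative_eq_intros simp: algebra_simps)
  ultimately show "\<exists>y. DERIV (\<lambda>t. t * exp t) x :> y \<and> y > 0" by blast
next
  show "continuous_on {u..v} (\<lambda>t. t * exp t)" by (intro continuous_intros)
qed

lemma lambertW0_props:
  fixes y :: real
  assumes "y \<ge> -1 / exp 1"
  shows "lambertW0 y \<ge> -1 \<and> lambertW0 y * exp (lambertW0 y) = y"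
proof -
  have ex: "\<exists>w. -1 \<le> w \<and> w \<le> \<bar>y\<bar> + 1 \<and> w * exp w = y"
  proof (rule IVT')
    show "(-1) * exp (-1) \<le> y" using assms by (simp add: exp_minus field_simps)
    have "y \<le> \<bar>y\<bar> + 1" by simp
    also have "\<bar>y\<bar> + 1 \<le> (\<bar>y\<bar> + 1) * exp (\<bar>y\<bar> + 1)"
      using exp_ge_add_one_self[of "\<bar>y\<bar> + 1"] by (intro mult_le_cancel_left1[THEN iffD2]) auto
    finally show "y \<le> (\<bar>y\<bar> + 1) * exp (\<bar>y\<bar> + 1)" .
    show "-1 \<le> \<bar>y\<bar> + 1" by simp
    show "continuous_on {-1..\<bar>y\<bar> + 1} (\<lambda>t. t * exp t)" by (intro continuous_intros)
  qed
  have "\<exists>!w. w \<ge> -1 \<and> w * exp w = y"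
  proof -
    from ex obtain w where w: "-1 \<le> w" "w * exp w = y" by blast
    { fix v assume v: "-1 \<le> v" "v * exp v = y"
      have "v = w"
      proof (rule ccontr)
        assume "v \<noteq> w"
        hence "v < w \<or> w < v" by linarith
        thus False using xexp_strict_mono[of v w] xexp_strict_mono[of w v] v w by auto
      qed }
    with w show ?thesis by blast
  qed
  from theI'[OF this] show ?thesis unfolding lambertW0_def by blast
qed

lemma tangent: "exp a * (1 + x - a) \<le> exp (x::real)"
proof -
  have "exp a * (1 + (x - a)) \<le> exp a * exp (x - a)"
    by (intro mult_left_mono) auto
  also have "\<dots> = exp x" by (simp add: exp_diff)
  finally show ?thesis by (simp add: algebra_simps)
qed

lemma g_mono:
  fixes m al :: real
  assumes "0 \<le> m" "m \<le> al"
  shows "(m - 1) * exp m \<le> (al - 1) * exp al"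
proof (rule DERIV_nonneg_imp_nondecreasing[OF assms(2)])
  fix x assume "m \<le> x" "x \<le> al"
  hence "0 \<le> x * exp x" using assms by simp
  moreover have "DERIV (\<lambda>t. (t - 1) * exp t) x :> x * exp x"
    by (auto intro!: derivative_eq_intros simp: algebra_simps)
  ultimately show "\<exists>y. DERIV (\<lambda>t. (t - 1) * exp t) x :> y \<and> y \<ge> 0" by blast
qed

lemma psi1:
  fixes x al c :: real
  assumes "x > 0" "al > 0" "c = (al - 1) * exp al"
  shows "(c + exp al) / al \<le> (c + exp x) / x"
proof -
  have "(c + exp al) / al = exp al" using assms by (simp add: field_simps)
  moreover have "exp al * x \<le> c + exp x"
    using tangent[of al x] assms(3) by (simp add: algebra_simps)
  ultimately show ?thesis using assms by (simp add: pos_le_divide_eq)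
qed

lemma psi2:
  fixes x m c :: real
  assumes "x > 0" "x \<le> m" "c \<ge> (m - 1) * exp m"
  shows "(c + exp m) / m \<le> (c + exp x) / x"
proof -
  have m: "m > 0" using assms by simp
  have t: "m * (exp m * (1 + x - m)) \<le> m * exp x"
    using tangent[of m x] m by (intro mult_left_mono) auto
  have "0 \<le> (m - x) * (c - (m - 1) * exp m)"
    using assms by (intro mult_nonneg_nonneg) auto
  hence "x * (c + exp m) \<le> m * (c + exp x)"
    using t by (simp add: algebra_simps)
  thus ?thesis using assms m by (simp add: divide_simps mult.commute)
qed

lemma lb:
  fixes a c D W P t0 tS :: real
  assumes "c > 0" "a > 0" "D > 0" "W > 0" "P \<ge> 0" "t0 \<ge> 0" "tS \<ge> 0"
    "P * tS \<le> c * t0" "tS * W * log 2 (1 + a * P) \<ge> D"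
  shows "ln (1 + a * P) > 0 \<and>
    t0 + tS \<ge> D * ln 2 / (W * (a * c)) * ((a * c - 1 + exp (ln (1 + a * P))) / ln (1 + a * P))"
proof -
  define x where "x = ln (1 + a * P)"
  have aP: "0 < 1 + a * P" using assms by (simp add: add_pos_nonneg)
  have ex: "exp x = 1 + a * P" unfolding x_def using aP by simp
  have lg: "log 2 (1 + a * P) = x / ln 2" unfolding x_def log_def by simp
  have l2: "ln (2::real) > 0" by simp
  have "D \<le> tS * W * x / ln 2" using assms(9) lg by simp
  hence D2: "D * ln 2 \<le> tS * W * x" using l2 by (simp add: pos_le_divide_eq)
  have xpos: "x > 0"
  proof (rule ccontr)
    assume "\<not> x > 0"
    hence "tS * W * x \<le> 0" using assms
      by (simp add: mult_nonneg_nonpos)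
    thus False using D2 assms(3) l2 by (smt (verit) mult_pos_pos)
  qed
  have tS: "tS \<ge> D * ln 2 / (W * x)" using D2 xpos assms by (simp add: pos_divide_le_eq algebra_simps)
  have t0: "t0 \<ge> P * tS / c" using assms by (simp add: pos_divide_le_eq mult.commute)
  have "t0 + tS \<ge> tS * (1 + P / c)" using t0 by (simp add: algebra_simps)
  moreover have "1 + P / c = (a * c - 1 + exp x) / (a * c)" using ex assms by (simp add: field_simps)
  moreover have "(a * c - 1 + exp x) / (a * c) \<ge> 0" using ex assms by simp
  ultimately have "t0 + tS \<ge> D * ln 2 / (W * x) * ((a * c - 1 + exp x) / (a * c))"
    using tS by (smt (verit) mult_right_mono)
  also have "D * ln 2 / (W * x) * ((a * c - 1 + exp x) / (a * c))
      = D * ln 2 / (W * (a * c)) * ((a * c - 1 + exp x) / x)" by (simp add: field_simps)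
  finally show ?thesis using xpos unfolding x_def by simp
qed

theorem theorem2:
  fixes D W N0 \<zeta> PA h g Pmax :: real
  assumes "D > 0" "W > 0" "N0 > 0" "\<zeta> > 0" "PA > 0" "h > 0" "g > 0" "Pmax > 0"
  defines "\<gamma> \<equiv> g * \<zeta> * PA * h / (W * N0)"
  defines "\<alpha> \<equiv> lambertW0 ((\<gamma> - 1) / exp 1) + 1"
  defines "\<tau>S1 \<equiv> D * ln 2 / (W * \<alpha>)"
  defines "\<tau>01 \<equiv> D * ln 2 / (W * \<alpha> * \<gamma>) * (2 powr (\<alpha> / ln 2) - 1)"
  defines "\<tau>S2 \<equiv> D / (W * log 2 (1 + Pmax * g / (W * N0)))"
  defines "\<tau>02 \<equiv> Pmax * \<tau>S2 / (\<zeta> * PA * h)"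
  shows "(\<zeta> * PA * h * \<tau>01 / \<tau>S1 \<le> Pmax \<longrightarrow>
            optimal D W N0 \<zeta> PA h g Pmax (\<tau>01, \<tau>S1, \<zeta> * PA * h * \<tau>01 / \<tau>S1)) \<and>
         (\<not> (\<zeta> * PA * h * \<tau>01 / \<tau>S1 \<le> Pmax) \<longrightarrow>
            optimal D W N0 \<zeta> PA h g Pmax (\<tau>02, \<tau>S2, Pmax))"
proof -
  note pos = assms(1-8)
  define c where "c = \<zeta> * PA * h"
  define a where "a = g / (W * N0)"
  have c: "c > 0" unfolding c_def using pos by simp
  have a: "a > 0" unfolding a_def using pos by simp
  have gam: "\<gamma> = a * c" unfolding \<gamma>_def a_def c_def by simp
  have gpos: "\<gamma> > 0" using gam a c by simp
  have Pg: "\<And>P. P * g / (W * N0) = a * P" unfolding a_def by simp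
  have l2: "ln (2::real) > 0" by simp
  have "(\<gamma> - 1) / exp 1 \<ge> -1 / exp 1" using gpos by (intro divide_right_mono) auto
  from lambertW0_props[OF this] obtain w where w: "w \<ge> -1" "w * exp w = (\<gamma> - 1) / exp 1"
    and alw: "\<alpha> = w + 1" unfolding \<alpha>_def by blast
  have ca: "\<gamma> - 1 = (\<alpha> - 1) * exp \<alpha>"
  proof -
    have "(\<alpha> - 1) * exp \<alpha> = (w * exp w) * exp 1" using alw by (simp add: exp_add)
    also have "\<dots> = \<gamma> - 1" using w by simp
    finally show ?thesis by simp
  qed
  have apos: "\<alpha> > 0"
  proof -
    have "\<alpha> \<ge> 0" using alw w by simp
    moreover have "\<alpha> \<noteq> 0" using ca gpos by auto
    ultimately show ?thesis by simp
  qed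
  define K where "K = D * ln 2 / (W * \<gamma>)"
  have K: "K \<ge> 0" unfolding K_def using pos gpos l2 by simp
  have lower: "ln (1 + a * P) > 0 \<and> t0 + tS \<ge> K * ((\<gamma> - 1 + exp (ln (1 + a * P))) / ln (1 + a * P))"
    if "feasible D W N0 \<zeta> PA h g Pmax (t0, tS, P)" for t0 tS P
    using that lb[of c a D W P t0 tS] c a pos unfolding feasible_def Pg gam K_def c_def
    by (simp add: mult.assoc)
  have feasI: "feasible D W N0 \<zeta> PA h g Pmax (t0, tS, P)"
    if "t0 \<ge> 0" "tS \<ge> 0" "P \<ge> 0" "P * tS \<le> c * t0" "tS * W * log 2 (1 + a * P) \<ge> D" "P \<le> Pmax"
    for t0 tS P
    using that unfolding feasible_def Pg c_def by (simp add: mult.assoc)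
  have pw: "2 powr (\<alpha> / ln 2) = exp \<alpha>" using l2 by (simp add: powr_def)
  have tS1: "\<tau>S1 > 0" unfolding \<tau>S1_def using pos apos l2 by simp
  have P1: "\<zeta> * PA * h * \<tau>01 / \<tau>S1 = (exp \<alpha> - 1) / a"
    unfolding \<tau>01_def \<tau>S1_def pw c_def[symmetric] gam using a c apos pos l2
    by (simp add: field_simps)
  have show1: "optimal D W N0 \<zeta> PA h g Pmax (\<tau>01, \<tau>S1, \<zeta> * PA * h * \<tau>01 / \<tau>S1)"
    if le: "\<zeta> * PA * h * \<tau>01 / \<tau>S1 \<le> Pmax"
  proof -
    have e1: "exp \<alpha> \<ge> 1" using apos by simp
    have t01: "\<tau>01 \<ge> 0" unfolding \<tau>01_def pw using e1 pos apos gpos l2 by simp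
    have "1 + a * ((exp \<alpha> - 1) / a) = exp \<alpha>" using a by simp
    hence lg: "log 2 (1 + a * ((exp \<alpha> - 1) / a)) = \<alpha> / ln 2" by (simp add: log_def)
    have feas: "feasible D W N0 \<zeta> PA h g Pmax (\<tau>01, \<tau>S1, \<zeta> * PA * h * \<tau>01 / \<tau>S1)"
    proof (rule feasI)
      show "0 \<le> \<tau>01" by (rule t01)
      show "0 \<le> \<tau>S1" using tS1 by simp
      show "0 \<le> \<zeta> * PA * h * \<tau>01 / \<tau>S1" unfolding P1 using e1 a by simp
      show "\<zeta> * PA * h * \<tau>01 / \<tau>S1 * \<tau>S1 \<le> c * \<tau>01" using tS1 unfolding c_def by simp
      show "D \<le> \<tau>S1 * W * log 2 (1 + a * (\<zeta> * PA * h * \<tau>01 / \<tau>S1))"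
        unfolding P1 lg by (simp add: \<tau>S1_def) (use pos apos l2 in simp)
      show "\<zeta> * PA * h * \<tau>01 / \<tau>S1 \<le> Pmax" by (rule le)
    qed
    have obj: "\<tau>01 + \<tau>S1 = K * ((\<gamma> - 1 + exp \<alpha>) / \<alpha>)"
      unfolding \<tau>01_def \<tau>S1_def K_def pw using pos apos gpos l2 by (simp add: field_simps)
    show ?thesis unfolding optimal_def
    proof (intro conjI allI impI)
      show "feasible D W N0 \<zeta> PA h g Pmax (\<tau>01, \<tau>S1, \<zeta> * PA * h * \<tau>01 / \<tau>S1)" by (rule feas)
      fix y assume fy: "feasible D W N0 \<zeta> PA h g Pmax y"
      obtain t0 tS P where y: "y = (t0, tS, P)" by (cases y) auto
      from lower[of t0 tS P] fy y have L: "ln (1 + a * P) > 0"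
        "t0 + tS \<ge> K * ((\<gamma> - 1 + exp (ln (1 + a * P))) / ln (1 + a * P))" by auto
      have "K * ((\<gamma> - 1 + exp \<alpha>) / \<alpha>) \<le> K * ((\<gamma> - 1 + exp (ln (1 + a * P))) / ln (1 + a * P))"
        using psi1[OF L(1) apos ca] K by (intro mult_left_mono) auto
      with L(2) obj y show "fst (\<tau>01, \<tau>S1, \<zeta> * PA * h * \<tau>01 / \<tau>S1)
          + fst (snd (\<tau>01, \<tau>S1, \<zeta> * PA * h * \<tau>01 / \<tau>S1)) \<le> fst y + fst (snd y)" by simp
    qed
  qed
  have show2: "optimal D W N0 \<zeta> PA h g Pmax (\<tau>02, \<tau>S2, Pmax)"
    if gt: "\<not> (\<zeta> * PA * h * \<tau>01 / \<tau>S1 \<le> Pmax)"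
  proof -
    define m where "m = ln (1 + a * Pmax)"
    have aP: "1 + a * Pmax > 1" using a pos by simp
    have em: "exp m = 1 + a * Pmax" unfolding m_def using aP by simp
    have mpos: "m > 0" unfolding m_def using aP by simp
    have "exp \<alpha> - 1 > a * Pmax" using gt a unfolding P1 by (simp add: not_le pos_less_divide_eq mult.commute)
    hence "exp m < exp \<alpha>" using em by simp
    hence ma: "m < \<alpha>" by simp
    have lg: "log 2 (1 + a * Pmax) = m / ln 2" unfolding m_def log_def by simp
    have tS2: "\<tau>S2 = D * ln 2 / (W * m)" unfolding \<tau>S2_def Pg lg by simp
    have tS2p: "\<tau>S2 > 0" unfolding tS2 using pos mpos l2 by simp
    have t02: "\<tau>02 = Pmax * \<tau>S2 / c" unfolding \<tau>02_def c_def by simp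
    have feas: "feasible D W N0 \<zeta> PA h g Pmax (\<tau>02, \<tau>S2, Pmax)"
    proof (rule feasI)
      show "0 \<le> \<tau>02" unfolding t02 using tS2p pos c by simp
      show "0 \<le> \<tau>S2" using tS2p by simp
      show "0 \<le> Pmax" using pos by simp
      show "Pmax * \<tau>S2 \<le> c * \<tau>02" unfolding t02 using c by simp
      show "D \<le> \<tau>S2 * W * log 2 (1 + a * Pmax)" unfolding tS2 lg using pos mpos l2 by simp
    qed simp
    have obj: "\<tau>02 + \<tau>S2 = K * ((\<gamma> - 1 + exp m) / m)"
      unfolding t02 tS2 K_def em gam using pos mpos l2 a c by (simp add: field_simps)
    have cm: "\<gamma> - 1 \<ge> (m - 1) * exp m" using g_mono[of m \<alpha>] ma mpos ca by simp
    show ?thesis unfolding optimal_def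
    proof (intro conjI allI impI)
      show "feasible D W N0 \<zeta> PA h g Pmax (\<tau>02, \<tau>S2, Pmax)" by (rule feas)
      fix y assume fy: "feasible D W N0 \<zeta> PA h g Pmax y"
      obtain t0 tS P where y: "y = (t0, tS, P)" by (cases y) auto
      from lower[of t0 tS P] fy y have L: "ln (1 + a * P) > 0"
        "t0 + tS \<ge> K * ((\<gamma> - 1 + exp (ln (1 + a * P))) / ln (1 + a * P))" by auto
      have PP: "P \<le> Pmax" "0 \<le> P" using fy y unfolding feasible_def by auto
      have "ln (1 + a * P) \<le> m" unfolding m_def using PP a
        by (subst ln_le_cancel_iff) (auto intro: add_pos_nonneg)
      hence "K * ((\<gamma> - 1 + exp m) / m) \<le> K * ((\<gamma> - 1 + exp (ln (1 + a * P))) / ln (1 + a * P))"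
        using psi2[OF L(1) _ cm] K by (intro mult_left_mono) auto
      with L(2) obj y show "fst (\<tau>02, \<tau>S2, Pmax) + fst (snd (\<tau>02, \<tau>S2, Pmax)) \<le> fst y + fst (snd y)"
        by simp
    qed
  qed
  show ?thesis using show1 show2 by blast
qed

end
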